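(* Let $M\ge0$. There is no infinite antichain $S_1,S_2,\dots$ in $(\mathrm{RL},\le_{RL})$, with $S_i$ of type $(d_i,n_i)$, for which the sequence $(d_i)_i$ is bounded.
   Context: Fix an integer $M\ge0$. A reading list of type $(d,n)$ is a tuple $S=(S^1,\dots,S^n)$ of $d$-element subsets of $[Md]=\{1,\dots,Md\}$ (each $S^i$ viewed as an increasing word). $\mathrm{RL}$ denotes the set of all reading lists of all types. For $S=(S^1,\dots,S^n)$ of type $(d,n)$ and $T=(T^1,\dots,T^m)$ of type $(e,m)$, define $S\le_{RL}T$ iff there exist indices $1\le k_1<k_2<\cdots<k_n\le m$ and maps $f_i:S^i\to T^{k_i}$ ($i=1,\dots,n$), each strictly increasing, such that $f_i(x)=f_j(x)$ for all $i,j$ and all $x\in S^i\cap S^j$. An antichain is a sequence of pairwise incomparable elements. *)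

theory Defs
  imports Main
begin

text \<open>A reading list of type (d,n) is represented as a pair (d, S) where S is a list of
  length n of d-element subsets of [M d] = {1..M*d}.\<close>

definition RL :: "nat \<Rightarrow> (nat \<times> nat set list) set" where
  "RL M = {(d, S). \<forall>A\<in>set S. card A = d \<and> A \<subseteq> {1..M*d}}"

text \<open>The order on reading lists (indices of list entries are 0-based).\<close>

definition rl_le :: "nat \<times> nat set list \<Rightarrow> nat \<times> nat set list \<Rightarrow> bool" where
  "rl_le S T \<longleftrightarrow>
     (let SS = snd S; TT = snd T; n = length SS; m = length TT in
      \<exists>(k :: nat \<Rightarrow> nat) (f :: nat \<Rightarrow> nat \<Rightarrow> nat).
        strict_mono_on {..<n} k \<and> (\<forall>i<n. k i < m) \<and>
        (\<forall>i<n. strict_mono_on (SS ! i) (f i) \<and> f i ` (SS ! i) \<subseteq> TT ! (k i)) \<and>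
        (\<forall>i<n. \<forall>j<n. \<forall>x \<in> SS ! i \<inter> SS ! j. f i x = f j x))"

end

theory Submission
  imports Defs "HOL-Library.Sublist" "HOL-Library.Infinite_Set"
begin

definition badseq :: "(nat \<Rightarrow> 'a list) \<Rightarrow> bool" where
  "badseq f \<longleftrightarrow> (\<forall>i j. i < j \<longrightarrow> \<not> subseq (f i) (f j))"

definition BS :: "'a set \<Rightarrow> (nat \<Rightarrow> 'a list) set" where
  "BS A = {f. (\<forall>i. set (f i) \<subseteq> A) \<and> badseq f}"

definition cands :: "'a set \<Rightarrow> 'a list list \<Rightarrow> 'a list set" where
  "cands A p = {f (length p) | f. f \<in> BS A \<and> (\<forall>k<length p. f k = p ! k)}"

definition nxt :: "'a set \<Rightarrow> 'a list list \<Rightarrow> 'a list" where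
  "nxt A p = (SOME w. w \<in> cands A p \<and> (\<forall>w'\<in>cands A p. length w \<le> length w'))"

primrec pre :: "'a set \<Rightarrow> nat \<Rightarrow> 'a list list" where
  "pre A 0 = []"
| "pre A (Suc n) = pre A n @ [nxt A (pre A n)]"

lemma nxt_spec:
  assumes "cands A p \<noteq> {}"
  shows "nxt A p \<in> cands A p \<and> (\<forall>w'\<in>cands A p. length (nxt A p) \<le> length w')"
proof -
  from assms obtain w where "w \<in> cands A p" by blast
  then have "\<exists>x. x \<in> cands A p \<and> (\<forall>y. y \<in> cands A p \<longrightarrow> length x \<le> length y)"
    by (rule ex_has_least_nat)
  then have "\<exists>x. x \<in> cands A p \<and> (\<forall>y\<in>cands A p. length x \<le> length y)" by blast
  then show ?thesis unfolding nxt_def by (rule someI_ex)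
qed

lemma length_pre [simp]: "length (pre A n) = n"
  by (induction n) auto

lemma pre_nth: "k < n \<Longrightarrow> pre A n ! k = pre A (Suc k) ! k"
proof (induction n)
  case 0 then show ?case by simp
next
  case (Suc n)
  show ?case
  proof (cases "k < n")
    case True
    then show ?thesis using Suc by (simp add: nth_append)
  next
    case False
    then have "k = n" using Suc by simp
    then show ?thesis by simp
  qed
qed

lemma pre_inv:
  assumes "BS A \<noteq> {}"
  shows "\<exists>f\<in>BS A. \<forall>k<n. f k = pre A n ! k"
proof (induction n)
  case 0 then show ?case using assms by auto
next
  case (Suc n)
  then have "cands A (pre A n) \<noteq> {}" unfolding cands_def by auto
  from nxt_spec[OF this] have "nxt A (pre A n) \<in> cands A (pre A n)" by blast
  then obtain f where f: "f \<in> BS A" "\<forall>k<n. f k = pre A n ! k" "f n = nxt A (pre A n)"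
    unfolding cands_def by auto
  have "\<forall>k<Suc n. f k = pre A (Suc n) ! k"
    using f by (auto simp: nth_append less_Suc_eq)
  with f(1) show ?case by blast
qed

lemma higman_aux:
  assumes fin: "finite A" and ne: "BS A \<noteq> {}"
  shows False
proof -
  define m where "m n = pre A (Suc n) ! n" for n
  have pm: "pre A n ! k = m k" if "k < n" for n k
    using pre_nth[OF that] m_def by simp
  have inv: "\<exists>f\<in>BS A. \<forall>k\<le>n. f k = m k" for n
  proof -
    obtain f where "f\<in>BS A" "\<forall>k<Suc n. f k = pre A (Suc n) ! k"
      using pre_inv[OF ne] by blast
    then show ?thesis using pm[of _ "Suc n"] by (metis le_imp_less_Suc)
  qed
  have mbad: "\<not> subseq (m i) (m j)" if "i < j" for i j
  proof -
    obtain f where "f\<in>BS A" "\<forall>k\<le>j. f k = m k" using inv by blast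
    then have "f i = m i" "f j = m j" "badseq f" using that by (auto simp: BS_def)
    then show ?thesis using that unfolding badseq_def by metis
  qed
  have mA: "set (m i) \<subseteq> A" for i
  proof -
    obtain f where "f\<in>BS A" "\<forall>k\<le>i. f k = m k" using inv by blast
    then have "f i = m i" "set (f i) \<subseteq> A" unfolding BS_def by blast+
    then show ?thesis by metis
  qed
  have mmin: "length (m n) \<le> length (g n)" if "g \<in> BS A" "\<forall>k<n. g k = m k" for g n
  proof -
    have "g n \<in> cands A (pre A n)" unfolding cands_def using that pm by auto
    then have "cands A (pre A n) \<noteq> {}" by blast
    from nxt_spec[OF this] \<open>g n \<in> cands A (pre A n)\<close>
    have "length (nxt A (pre A n)) \<le> length (g n)" by blast
    moreover have "m n = nxt A (pre A n)" unfolding m_def by (simp add: nth_append)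
    ultimately show ?thesis by simp
  qed
  have mne: "m i \<noteq> []" for i
  proof
    assume "m i = []"
    then have "subseq (m i) (m (Suc i))" by simp
    with mbad[of i "Suc i"] show False by simp
  qed
  define a where "a i = hd (m i)" for i
  define t where "t i = tl (m i)" for i
  have mat: "m i = a i # t i" for i using mne[of i] unfolding a_def t_def by simp
  have "finite (a ` UNIV)"
    by (rule finite_subset[OF _ fin]) (use mA mat in \<open>force\<close>)
  then obtain c where "infinite (a -` {c})"
    using inf_img_fin_domE[of a UNIV] by auto
  define S where "S = a -` {c}"
  have inf: "infinite S" using \<open>infinite (a -` {c})\<close> S_def by simp
  define \<phi> where "\<phi> = enumerate S"
  have phS: "a (\<phi> i) = c" for i using enumerate_in_set[OF inf] unfolding \<phi>_def S_def by auto
  have phmono: "\<phi> i < \<phi> j" if "i < j" for i j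
    using enumerate_mono[OF that inf] \<phi>_def by simp
  have phge: "\<phi> 0 \<le> \<phi> i" for i
    using phmono[of 0 i] by (cases i) auto
  define n0 where "n0 = \<phi> 0"
  define g where "g k = (if k < n0 then m k else t (\<phi> (k - n0)))" for k
  have gA: "set (g i) \<subseteq> A" for i
    using mA mat unfolding g_def by (auto)
  have gbad: "\<not> subseq (g i) (g j)" if "i < j" for i j
  proof
    assume s: "subseq (g i) (g j)"
    show False
    proof (cases "j < n0")
      case True
      then show False using s that mbad[OF that] by (simp add: g_def)
    next
      case jn: False
      then have gj: "g j = t (\<phi> (j - n0))" by (simp add: g_def)
      have mj: "m (\<phi> (j - n0)) = c # t (\<phi> (j - n0))" using mat phS by metis
      show False
      proof (cases "i < n0")
        case True
        then have "subseq (m i) (t (\<phi> (j - n0)))" using s gj by (simp add: g_def)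
        then have "subseq (m i) (m (\<phi> (j - n0)))" using mj by (simp add: list_emb_Cons)
        moreover have "i < \<phi> (j - n0)" using True phge n0_def
          by (meson less_le_trans)
        ultimately show False using mbad by blast
      next
        case False
        then have "subseq (t (\<phi> (i - n0))) (t (\<phi> (j - n0)))" using s gj by (simp add: g_def)
        moreover have mi: "m (\<phi> (i - n0)) = c # t (\<phi> (i - n0))" using mat phS by metis
        ultimately have "subseq (m (\<phi> (i - n0))) (m (\<phi> (j - n0)))" using mj by simp
        moreover have "\<phi> (i - n0) < \<phi> (j - n0)" using phmono False that by simp
        ultimately show False using mbad by blast
      qed
    qed
  qed
  have "g \<in> BS A" using gA gbad by (auto simp: BS_def badseq_def)
  moreover have "\<forall>k<n0. g k = m k" by (simp add: g_def)
  ultimately have "length (m n0) \<le> length (g n0)" by (rule mmin)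
  moreover have "g n0 = t n0" by (simp add: g_def n0_def)
  moreover have "length (m n0) = Suc (length (t n0))" using mat[of n0] by simp
  ultimately show False by simp
qed

lemma higman:
  fixes f :: "nat \<Rightarrow> 'a list"
  assumes "finite A" "\<forall>i. set (f i) \<subseteq> A"
  shows "\<exists>i j. i < j \<and> subseq (f i) (f j)"
proof (rule ccontr)
  assume "\<not> ?thesis"
  then have "f \<in> BS A" using assms by (auto simp: BS_def badseq_def)
  then show False using higman_aux[OF assms(1)] by blast
qed

lemma subseq_idx:
  "subseq xs ys \<Longrightarrow> \<exists>k. strict_mono_on {..<length xs} k \<and>
     (\<forall>i<length xs. k i < length ys \<and> xs ! i = ys ! (k i))"
proof (induction rule: list_emb.induct)
  case (list_emb_Nil ys)
  then show ?case by (auto simp: strict_mono_on_def)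
next
  case (list_emb_Cons xs ys y)
  then obtain k where k: "strict_mono_on {..<length xs} k"
    "\<forall>i<length xs. k i < length ys \<and> xs ! i = ys ! (k i)" by blast
  have "strict_mono_on {..<length xs} (\<lambda>i. Suc (k i))"
    using k(1) by (auto simp: strict_mono_on_def)
  moreover have "\<forall>i<length xs. Suc (k i) < length (y#ys) \<and> xs ! i = (y#ys) ! (Suc (k i))"
    using k(2) by simp
  ultimately show ?case by blast
next
  case (list_emb_Cons2 x y xs ys)
  then obtain k where k: "strict_mono_on {..<length xs} k"
    "\<forall>i<length xs. k i < length ys \<and> xs ! i = ys ! (k i)" by blast
  define k' where "k' i = (case i of 0 \<Rightarrow> 0 | Suc i \<Rightarrow> Suc (k i))" for i
  have "strict_mono_on {..<length (x#xs)} k'"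
  proof (rule strict_mono_onI)
    fix r s assume "r \<in> {..<length (x#xs)}" "s \<in> {..<length (x#xs)}" "r < s"
    then show "k' r < k' s" using k(1)
      by (cases r; cases s) (auto simp: k'_def strict_mono_on_def)
  qed
  moreover have "\<forall>i<length (x#xs). k' i < length (y#ys) \<and> (x#xs) ! i = (y#ys) ! (k' i)"
  proof (intro allI impI)
    fix i assume "i < length (x#xs)"
    then show "k' i < length (y#ys) \<and> (x#xs) ! i = (y#ys) ! (k' i)"
      using k(2) list_emb_Cons2.hyps(1) by (cases i) (auto simp: k'_def)
  qed
  ultimately show ?case by blast
qed

theorem mainTheorem6:
  fixes M :: nat
  shows "\<not> (\<exists>(Sq :: nat \<Rightarrow> nat \<times> nat set list) (B :: nat).
            (\<forall>i. Sq i \<in> RL M) \<and> (\<forall>i. fst (Sq i) \<le> B) \<and>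
            (\<forall>i j. i \<noteq> j \<longrightarrow> \<not> rl_le (Sq i) (Sq j)))"
proof
  assume "\<exists>(Sq :: nat \<Rightarrow> nat \<times> nat set list) (B :: nat).
            (\<forall>i. Sq i \<in> RL M) \<and> (\<forall>i. fst (Sq i) \<le> B) \<and>
            (\<forall>i j. i \<noteq> j \<longrightarrow> \<not> rl_le (Sq i) (Sq j))"
  then obtain Sq :: "nat \<Rightarrow> nat \<times> nat set list" and B where
    RL: "\<forall>i. Sq i \<in> RL M" and Bd: "\<forall>i. fst (Sq i) \<le> B" and
    anti: "\<forall>i j. i \<noteq> j \<longrightarrow> \<not> rl_le (Sq i) (Sq j)" by blast
  have sA: "set (snd (Sq i)) \<subseteq> Pow {1..M*B}" for i
  proof
    fix X assume X: "X \<in> set (snd (Sq i))"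
    obtain d S where dS: "Sq i = (d, S)" by fastforce
    have "X \<subseteq> {1..M*d}" using RL[rule_format, of i] X dS by (auto simp: RL_def)
    moreover have "d \<le> B" using Bd[rule_format, of i] dS by simp
    then have "{1..M*d} \<subseteq> {1..M*B}" by (auto intro: order_trans[OF _ mult_le_mono2])
    ultimately show "X \<in> Pow {1..M*B}" by blast
  qed
  obtain i j where ij: "i < j" "subseq (snd (Sq i)) (snd (Sq j))"
    using higman[of "Pow {1..M*B}" "\<lambda>i. snd (Sq i)"] sA by blast
  obtain k where k: "strict_mono_on {..<length (snd (Sq i))} k"
    "\<forall>r<length (snd (Sq i)). k r < length (snd (Sq j)) \<and> snd (Sq i) ! r = snd (Sq j) ! (k r)"
    using subseq_idx[OF ij(2)] by blast
  have "rl_le (Sq i) (Sq j)"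
    unfolding rl_le_def Let_def
    apply (rule exI[of _ k], rule exI[of _ "\<lambda>_ x. x"])
    using k by (auto simp: strict_mono_on_def)
  with anti ij(1) show False by auto
qed

end
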